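(* Let $\delta\ge 0$ be a real number and let $g,u,c:\mathbb{R}\to[0,\infty)$ be continuous functions. Let $\{\varepsilon_t\}_t$ be an i.i.d. sequence with mean $0$ and variance $1$, let $\{x_t\}_t$ be a strictly stationary ergodic process independent of $\{\varepsilon_t\}_t$, with $\{(\varepsilon_t,x_t)\}_t$ adapted to a filtration $\{\mathcal{F}_t\}_t$. Suppose that for some $\alpha\in(0,1]$, $E|\varepsilon_t|^{\delta\alpha}<\infty$, $E(u(x_t))^{\alpha}<\infty$, $E(c(\varepsilon_t))^{\alpha}<1$, $E(g(\varepsilon_t))^{\alpha}<\infty$. Let $\{(R_t,\sigma_t)\}_t$ be the stationary ergodic solution of $$R_t=\sigma_t\varepsilon_t,\qquad \sigma_t^{\delta}=g(\varepsilon_{t-1})+u(x_{t-1})+\sum_{k=1}^{\infty}\Big(\prod_{j=0}^{k-1}c(\varepsilon_{t-1-j})\Big)\big[g(\varepsilon_{t-1-k})+u(x_{t-1-k})\big],$$ and let $\{(\tilde R_t,\tilde\sigma_t)\}_{t\ge0}$ be the process started at time $0$ defined by $$\tilde R_t=\tilde\sigma_t\varepsilon_t,\qquad \tilde\sigma_t^{\delta}=g(\varepsilon_{t-1})+u(x_{t-1})+c(\varepsilon_{t-1})\tilde\sigma_{t-1}^{\delta}\ (t\ge1),$$ where $\tilde\sigma_0$ is independent of $\{\varepsilon_t\}_t$ and $E|\tilde\sigma_0|^{\delta\alpha}<\infty$. Then $$\tilde R_t=\tilde\sigma_t\varepsilon_t,\qquad \tilde\sigma_t^{\delta}=\sigma_t^{\delta}+\xi_t,$$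 where $E|\xi_t|^{\alpha}=\mathcal{O}(\rho^t)$ for some $0<\rho<1$. Similarly, $\tilde R_t^{\delta}=R_t^{\delta}+\psi_t$ with $E|\psi_t|^{\alpha}=\mathcal{O}(\rho^t)$ with the same $\rho$, where $R_t^{\delta}=\sigma_t^{\delta}\varepsilon_t^{\delta}$.
   Context: The functions $g,u,c$ are assumed chosen so that $P(\sigma_t>0)=1$ for every $t$. *)

theory Defs
  imports "HOL-Probability.Probability" "HOL-Library.Landau_Symbols"
begin

definition stationary_proc :: "'a measure \<Rightarrow> (int \<Rightarrow> 'a \<Rightarrow> real) \<Rightarrow> bool" where
  "stationary_proc M X \<longleftrightarrow>
     (\<forall>s::int. distr M (PiM UNIV (\<lambda>_. borel)) (\<lambda>\<omega> t. X (t + s) \<omega>)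
             = distr M (PiM UNIV (\<lambda>_. borel)) (\<lambda>\<omega> t. X t \<omega>))"

definition ergodic_proc :: "'a measure \<Rightarrow> (int \<Rightarrow> 'a \<Rightarrow> real) \<Rightarrow> bool" where
  "ergodic_proc M X \<longleftrightarrow>
     (\<forall>A \<in> sets (PiM (UNIV::int set) (\<lambda>_. (borel :: real measure))).
        {f. (\<lambda>t. f (t + 1)) \<in> A} = A \<longrightarrow>
        measure M {\<omega> \<in> space M. (\<lambda>t. X t \<omega>) \<in> A} = 0 \<or>
        measure M {\<omega> \<in> space M. (\<lambda>t. X t \<omega>) \<in> A} = 1)"

end

theory Submission
  imports Defs
begin


lemma (in prob_space) indep_var_nn_integral_mult:
  assumes ind: "indep_var S X T Y"
    and f: "f \<in> borel_measurable S" and h: "h \<in> borel_measurable T"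
  shows "(\<integral>\<^sup>+\<omega>. f (X \<omega>) * h (Y \<omega>) \<partial>M) = (\<integral>\<^sup>+\<omega>. f (X \<omega>) \<partial>M) * (\<integral>\<^sup>+\<omega>. h (Y \<omega>) \<partial>M)"
proof -
  have rv: "random_variable S X" "random_variable T Y"
   and eq: "distr M S X \<Otimes>\<^sub>M distr M T Y = distr M (S \<Otimes>\<^sub>M T) (\<lambda>x. (X x, Y x))"
    using ind unfolding indep_var_distribution_eq by auto
  interpret DX: prob_space "distr M S X" by (rule prob_space_distr) fact
  interpret DY: prob_space "distr M T Y" by (rule prob_space_distr) fact
  interpret DXY: pair_prob_space "distr M S X" "distr M T Y" ..
  have m: "(\<lambda>p. f (fst p) * h (snd p)) \<in> borel_measurable (S \<Otimes>\<^sub>M T)"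
    by (intro borel_measurable_times_ennreal measurable_compose[OF measurable_fst f] measurable_compose[OF measurable_snd h])
  have m': "(\<lambda>p. f (fst p) * h (snd p)) \<in> borel_measurable (distr M S X \<Otimes>\<^sub>M distr M T Y)"
    using m measurable_cong_sets[OF sets_pair_measure_cong[OF sets_distr sets_distr] refl] by blast
  have m2: "(\<lambda>p. f (fst p) * h (snd p)) \<in> borel_measurable (distr M (S \<Otimes>\<^sub>M T) (\<lambda>x. (X x, Y x)))"
    using m by simp
  have f2: "f \<in> borel_measurable (distr M S X)" using f by simp
  have h2: "h \<in> borel_measurable (distr M T Y)" using h by simp
  have "(\<integral>\<^sup>+\<omega>. f (X \<omega>) * h (Y \<omega>) \<partial>M) = (\<integral>\<^sup>+p. f (fst p) * h (snd p) \<partial>distr M (S \<Otimes>\<^sub>M T) (\<lambda>x. (X x, Y x)))"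
    using nn_integral_distr[OF measurable_Pair[OF rv] m2] by simp
  also have "\<dots> = (\<integral>\<^sup>+p. f (fst p) * h (snd p) \<partial>(distr M S X \<Otimes>\<^sub>M distr M T Y))"
    by (simp only: eq)
  also have "\<dots> = (\<integral>\<^sup>+a. \<integral>\<^sup>+b. f a * h b \<partial>distr M T Y \<partial>distr M S X)"
    using DY.nn_integral_fst[OF m', symmetric] by simp
  also have "\<dots> = (\<integral>\<^sup>+a. f a * (\<integral>\<^sup>+b. h b \<partial>distr M T Y) \<partial>distr M S X)"
    by (intro nn_integral_cong nn_integral_cmult) (simp add: h)
  also have "\<dots> = (\<integral>\<^sup>+a. f a \<partial>distr M S X) * (\<integral>\<^sup>+b. h b \<partial>distr M T Y)"
    by (intro nn_integral_multc) (simp add: f)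
  also have "\<dots> = (\<integral>\<^sup>+\<omega>. f (X \<omega>) \<partial>M) * (\<integral>\<^sup>+\<omega>. h (Y \<omega>) \<partial>M)"
    using nn_integral_distr[OF rv(1) f2]
      nn_integral_distr[OF rv(2) h2] by simp
  finally show ?thesis .
qed


locale Sett = prob_space M for M :: "'a measure" +
  fixes eps x :: "int \<Rightarrow> 'a \<Rightarrow> real" and cc gg uu :: "real \<Rightarrow> real" and Z0 :: "'a \<Rightarrow> real"
  assumes eps_indep: "indep_vars (\<lambda>_. borel) eps UNIV"
    and eps_id: "\<And>t. distr M borel (eps t) = distr M borel (eps 0)"
    and xe: "indep_var (PiM UNIV (\<lambda>_. borel)) (\<lambda>\<omega> t. eps t \<omega>) (PiM UNIV (\<lambda>_. borel)) (\<lambda>\<omega> t. x t \<omega>)"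
    and ze: "indep_var (PiM UNIV (\<lambda>_. borel)) (\<lambda>\<omega> (t::int). Z0 \<omega>) (PiM UNIV (\<lambda>_. borel)) (\<lambda>\<omega> t. eps t \<omega>)"
    and x_u: "\<And>s. (\<integral>\<^sup>+\<omega>. ennreal (uu (x s \<omega>)) \<partial>M) = (\<integral>\<^sup>+\<omega>. ennreal (uu (x 0 \<omega>)) \<partial>M)"
    and cc_m[measurable]: "cc \<in> borel_measurable borel"
    and gg_m[measurable]: "gg \<in> borel_measurable borel"
    and uu_m[measurable]: "uu \<in> borel_measurable borel"
    and cc_nn: "\<And>y. 0 \<le> cc y" and gg_nn: "\<And>y. 0 \<le> gg y" and uu_nn: "\<And>y. 0 \<le> uu y"
begin

lemma eps_rv[measurable]: "eps t \<in> borel_measurable M"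
  using eps_indep by (auto simp: indep_vars_def)

lemma epsP_rv[measurable]: "(\<lambda>\<omega> t. eps t \<omega>) \<in> measurable M (PiM UNIV (\<lambda>_. borel))"
  using xe by (rule indep_var_rv1)

lemma xP_rv[measurable]: "(\<lambda>\<omega> t. x t \<omega>) \<in> measurable M (PiM UNIV (\<lambda>_. borel))"
  using xe by (rule indep_var_rv2)

lemma x_rv[measurable]: "x t \<in> borel_measurable M"
  using measurable_compose[OF xP_rv measurable_component_singleton[of t UNIV "\<lambda>_. borel"]] by simp

lemma Z0_rv[measurable]: "Z0 \<in> borel_measurable M"
  using measurable_compose[OF indep_var_rv1[OF ze] measurable_component_singleton[of 0 UNIV "\<lambda>_. borel"]] by simp

lemma prodJ:
  assumes J: "finite J" and Hm: "\<And>j. H j \<in> borel_measurable borel" and Hn: "\<And>j y. 0 \<le> H j y"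
  shows "(\<integral>\<^sup>+\<omega>. ennreal (\<Prod>j\<in>J. H j (eps j \<omega>)) \<partial>M) = (\<Prod>j\<in>J. \<integral>\<^sup>+\<omega>. ennreal (H j (eps 0 \<omega>)) \<partial>M)"
proof -
  have ind: "indep_vars (\<lambda>_. borel) (\<lambda>j \<omega>. ennreal (H j (eps j \<omega>))) J"
    by (rule indep_vars_compose2[OF indep_vars_subset[OF eps_indep subset_UNIV]]) (use Hm in simp)
  have "(\<integral>\<^sup>+\<omega>. ennreal (\<Prod>j\<in>J. H j (eps j \<omega>)) \<partial>M) = (\<integral>\<^sup>+\<omega>. (\<Prod>j\<in>J. ennreal (H j (eps j \<omega>))) \<partial>M)"
    by (intro nn_integral_cong) (simp add: prod_ennreal Hn)
  also have "\<dots> = (\<Prod>j\<in>J. \<integral>\<^sup>+\<omega>. ennreal (H j (eps j \<omega>)) \<partial>M)"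
    by (rule indep_vars_nn_integral[OF J ind]) simp
  also have "\<dots> = (\<Prod>j\<in>J. \<integral>\<^sup>+\<omega>. ennreal (H j (eps 0 \<omega>)) \<partial>M)"
  proof (intro prod.cong refl)
    fix j
    have m: "(\<lambda>y. ennreal (H j y)) \<in> borel_measurable borel" using Hm by simp
    have "(\<integral>\<^sup>+\<omega>. ennreal (H j (eps j \<omega>)) \<partial>M) = (\<integral>\<^sup>+y. ennreal (H j y) \<partial>distr M borel (eps j))"
      using m by (simp add: nn_integral_distr)
    also have "\<dots> = (\<integral>\<^sup>+y. ennreal (H j y) \<partial>distr M borel (eps 0))" by (simp only: eps_id[of j])
    also have "\<dots> = (\<integral>\<^sup>+\<omega>. ennreal (H j (eps 0 \<omega>)) \<partial>M)"
      using m by (simp add: nn_integral_distr)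
    finally show "(\<integral>\<^sup>+\<omega>. ennreal (H j (eps j \<omega>)) \<partial>M) = (\<integral>\<^sup>+\<omega>. ennreal (H j (eps 0 \<omega>)) \<partial>M)" .
  qed
  finally show ?thesis .
qed

definition "\<gamma> = (\<integral>\<^sup>+\<omega>. ennreal (cc (eps 0 \<omega>)) \<partial>M)"

lemma prod1:
  assumes A: "finite A" "a \<notin> A" and f: "f \<in> borel_measurable borel" "\<And>y. 0 \<le> f y"
  shows "(\<integral>\<^sup>+\<omega>. ennreal (f (eps a \<omega>) * (\<Prod>j\<in>A. cc (eps j \<omega>))) \<partial>M)
     = (\<integral>\<^sup>+\<omega>. ennreal (f (eps 0 \<omega>)) \<partial>M) * \<gamma> ^ card A"
proof -
  define H where "H j = (if j = a then f else cc)" for j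
  have "(\<integral>\<^sup>+\<omega>. ennreal (f (eps a \<omega>) * (\<Prod>j\<in>A. cc (eps j \<omega>))) \<partial>M)
      = (\<integral>\<^sup>+\<omega>. ennreal (\<Prod>j\<in>insert a A. H j (eps j \<omega>)) \<partial>M)"
    using A by (intro nn_integral_cong) (auto simp: H_def intro!: arg_cong[where f=ennreal] prod.cong)
  also have "\<dots> = (\<Prod>j\<in>insert a A. \<integral>\<^sup>+\<omega>. ennreal (H j (eps 0 \<omega>)) \<partial>M)"
    using A f cc_nn by (intro prodJ) (auto simp: H_def)
  also have "(\<Prod>j\<in>A. \<integral>\<^sup>+\<omega>. ennreal (H j (eps 0 \<omega>)) \<partial>M) = (\<Prod>j\<in>A. \<gamma>)"
    by (rule prod.cong[OF refl]) (use A in \<open>auto simp: H_def \<gamma>_def\<close>)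
  then have "(\<Prod>j\<in>insert a A. \<integral>\<^sup>+\<omega>. ennreal (H j (eps 0 \<omega>)) \<partial>M) = (\<integral>\<^sup>+\<omega>. ennreal (f (eps 0 \<omega>)) \<partial>M) * \<gamma> ^ card A"
    using A by (simp add: H_def)
  finally show ?thesis .
qed

lemma prod2:
  assumes A: "finite A" "a \<notin> A" "b \<notin> A" "a \<noteq> b" and f: "f \<in> borel_measurable borel" "\<And>y. 0 \<le> f y"
    and h: "h \<in> borel_measurable borel" "\<And>y. 0 \<le> h y"
  shows "(\<integral>\<^sup>+\<omega>. ennreal (f (eps a \<omega>) * h (eps b \<omega>) * (\<Prod>j\<in>A. cc (eps j \<omega>))) \<partial>M)
     = (\<integral>\<^sup>+\<omega>. ennreal (f (eps 0 \<omega>)) \<partial>M) * (\<integral>\<^sup>+\<omega>. ennreal (h (eps 0 \<omega>)) \<partial>M) * \<gamma> ^ card A"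
proof -
  define H where "H j = (if j = a then f else if j = b then h else cc)" for j
  have "(\<integral>\<^sup>+\<omega>. ennreal (f (eps a \<omega>) * h (eps b \<omega>) * (\<Prod>j\<in>A. cc (eps j \<omega>))) \<partial>M)
      = (\<integral>\<^sup>+\<omega>. ennreal (\<Prod>j\<in>insert a (insert b A). H j (eps j \<omega>)) \<partial>M)"
  proof -
    have "(\<Prod>j\<in>insert a (insert b A). H j (eps j \<omega>)) = f (eps a \<omega>) * h (eps b \<omega>) * (\<Prod>j\<in>A. cc (eps j \<omega>))" for \<omega>
    proof -
      have "(\<Prod>j\<in>A. H j (eps j \<omega>)) = (\<Prod>j\<in>A. cc (eps j \<omega>))"
        by (rule prod.cong[OF refl]) (use A in \<open>auto simp: H_def\<close>)
      then show ?thesis using A by (simp add: H_def mult.assoc)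
    qed
    then show ?thesis by simp
  qed
  also have "\<dots> = (\<Prod>j\<in>insert a (insert b A). \<integral>\<^sup>+\<omega>. ennreal (H j (eps 0 \<omega>)) \<partial>M)"
    using A f h cc_nn by (intro prodJ) (auto simp: H_def)
  also have "(\<Prod>j\<in>A. \<integral>\<^sup>+\<omega>. ennreal (H j (eps 0 \<omega>)) \<partial>M) = (\<Prod>j\<in>A. \<gamma>)"
    by (rule prod.cong[OF refl]) (use A in \<open>auto simp: H_def \<gamma>_def\<close>)
  then have "(\<Prod>j\<in>insert a (insert b A). \<integral>\<^sup>+\<omega>. ennreal (H j (eps 0 \<omega>)) \<partial>M) = (\<integral>\<^sup>+\<omega>. ennreal (f (eps 0 \<omega>)) \<partial>M) * (\<integral>\<^sup>+\<omega>. ennreal (h (eps 0 \<omega>)) \<partial>M) * \<gamma> ^ card A"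
    using A by (simp add: H_def mult.assoc)
  finally show ?thesis .
qed


definition "Bs \<omega> = (\<Sum>k. ennreal ((\<Prod>j\<in>{-int k..<0}. cc (eps j \<omega>)) * gg (eps (-1 - int k) \<omega>))
      + ennreal ((\<Prod>j\<in>{-int k..<0}. cc (eps j \<omega>)) * uu (x (-1 - int k) \<omega>)))"

lemma prod_split:
  "(\<Prod>j\<in>{0..<int t}. cc (eps j \<omega>)) * (\<Prod>j\<in>{-int k..<0}. cc (eps j \<omega>)) = (\<Prod>j\<in>{-int k..<int t}. cc (eps j \<omega>))"
proof -
  have "{-int k..<int t} = {-int k..<0} \<union> {0..<int t}" by auto
  then show ?thesis by (simp add: prod.union_disjoint mult.commute)
qed

lemma pim_meas:
  assumes em: "e \<in> borel_measurable borel"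
  shows "(\<lambda>z. ennreal (e (z a) * (\<Prod>j\<in>A. cc (z j)))) \<in> borel_measurable (PiM UNIV (\<lambda>_. borel))"
proof -
  have m1: "(\<lambda>z. e (z a)) \<in> borel_measurable (PiM UNIV (\<lambda>_. borel))"
    using measurable_compose[OF measurable_component_singleton[of a UNIV "\<lambda>_. borel"] em] by simp
  have m2: "(\<lambda>z. \<Prod>j\<in>A. cc (z j)) \<in> borel_measurable (PiM UNIV (\<lambda>_. borel))"
    by (rule borel_measurable_prod) (use measurable_compose[OF measurable_component_singleton[of _ UNIV "\<lambda>_. borel"] cc_m] in simp)
  have "(\<lambda>z. e (z a) * (\<Prod>j\<in>A. cc (z j))) \<in> borel_measurable (PiM UNIV (\<lambda>_. borel))"
    by (rule borel_measurable_times[OF m1 m2])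
  then show ?thesis by (rule measurable_compose[OF _ measurable_ennreal])
qed

lemma key:
  assumes em[measurable]: "e \<in> borel_measurable borel" and en: "\<And>y. 0 \<le> e y"
  shows "(\<integral>\<^sup>+\<omega>. ennreal (e (eps (int t) \<omega>) * (\<Prod>j\<in>{0..<int t}. cc (eps j \<omega>))) * (ennreal (Z0 \<omega>) + Bs \<omega>) \<partial>M)
    = (\<integral>\<^sup>+\<omega>. ennreal (e (eps 0 \<omega>)) \<partial>M) * \<gamma> ^ t *
      ((\<integral>\<^sup>+\<omega>. ennreal (Z0 \<omega>) \<partial>M) + (\<Sum>k. \<gamma> ^ k) *
        ((\<integral>\<^sup>+\<omega>. ennreal (gg (eps 0 \<omega>)) \<partial>M) + (\<integral>\<^sup>+\<omega>. ennreal (uu (x 0 \<omega>)) \<partial>M)))"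
proof -
  define Ee where "Ee = (\<integral>\<^sup>+\<omega>. ennreal (e (eps 0 \<omega>)) \<partial>M)"
  define G where "G = (\<integral>\<^sup>+\<omega>. ennreal (gg (eps 0 \<omega>)) \<partial>M)"
  define U where "U = (\<integral>\<^sup>+\<omega>. ennreal (uu (x 0 \<omega>)) \<partial>M)"
  define A0 where "A0 = (\<integral>\<^sup>+\<omega>. ennreal (Z0 \<omega>) \<partial>M)"
  define T where "T \<omega> = ennreal (e (eps (int t) \<omega>) * (\<Prod>j\<in>{0..<int t}. cc (eps j \<omega>)))" for \<omega>
  define P where "P k \<omega> = (\<Prod>j\<in>{-int k..<0}. cc (eps j \<omega>))" for k \<omega>
  have Pnn: "0 \<le> P k \<omega>" for k \<omega> by (simp add: P_def prod_nonneg cc_nn)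
  have Tm[measurable]: "T \<in> borel_measurable M" unfolding T_def by measurable
  have Pm[measurable]: "P k \<in> borel_measurable M" for k unfolding P_def by measurable
  have F0m: "(\<lambda>z. ennreal (e (z (int t)) * (\<Prod>j\<in>{0..<int t}. cc (z j)))) \<in> borel_measurable (PiM UNIV (\<lambda>_. borel))"
    by (rule pim_meas[OF em])
  have Z0f: "(\<lambda>z::int\<Rightarrow>real. ennreal (z 0)) \<in> borel_measurable (PiM UNIV (\<lambda>_. borel))"
    using measurable_compose[OF measurable_component_singleton[of 0 UNIV "\<lambda>_. borel"] measurable_ennreal] by simp
  have eq1: "(\<lambda>\<omega>. T \<omega> * (ennreal (Z0 \<omega>) + Bs \<omega>)) = (\<lambda>\<omega>. T \<omega> * ennreal (Z0 \<omega>) +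
      (\<Sum>k. T \<omega> * ennreal (P k \<omega> * gg (eps (-1 - int k) \<omega>)) + T \<omega> * ennreal (P k \<omega> * uu (x (-1 - int k) \<omega>))))"
    by (simp add: Bs_def P_def distrib_left flip: ennreal_suminf_cmult)
  have I1: "(\<integral>\<^sup>+\<omega>. T \<omega> * ennreal (Z0 \<omega>) \<partial>M) = A0 * (Ee * \<gamma> ^ t)"
  proof -
    have "(\<integral>\<^sup>+\<omega>. T \<omega> * ennreal (Z0 \<omega>) \<partial>M) = (\<integral>\<^sup>+\<omega>. (\<lambda>z. ennreal (z 0)) (\<lambda>s::int. Z0 \<omega>) *
        (\<lambda>z. ennreal (e (z (int t)) * (\<Prod>j\<in>{0..<int t}. cc (z j)))) (\<lambda>s. eps s \<omega>) \<partial>M)"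
      by (simp add: T_def mult.commute)
    also have "\<dots> = (\<integral>\<^sup>+\<omega>. ennreal (Z0 \<omega>) \<partial>M) * (\<integral>\<^sup>+\<omega>. ennreal (e (eps (int t) \<omega>) * (\<Prod>j\<in>{0..<int t}. cc (eps j \<omega>))) \<partial>M)"
      using indep_var_nn_integral_mult[OF ze Z0f F0m] by simp
    also have "(\<integral>\<^sup>+\<omega>. ennreal (e (eps (int t) \<omega>) * (\<Prod>j\<in>{0..<int t}. cc (eps j \<omega>))) \<partial>M) = Ee * \<gamma> ^ t"
      using prod1[of "{0..<int t}" "int t" e] en by (simp add: Ee_def)
    finally show ?thesis by (simp add: A0_def)
  qed
  have I2: "(\<integral>\<^sup>+\<omega>. T \<omega> * ennreal (P k \<omega> * gg (eps (-1 - int k) \<omega>)) \<partial>M) = Ee * G * \<gamma> ^ (k + t)" for k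
  proof -
    have "(\<integral>\<^sup>+\<omega>. T \<omega> * ennreal (P k \<omega> * gg (eps (-1 - int k) \<omega>)) \<partial>M)
       = (\<integral>\<^sup>+\<omega>. ennreal (e (eps (int t) \<omega>) * gg (eps (-1 - int k) \<omega>) * (\<Prod>j\<in>{-int k..<int t}. cc (eps j \<omega>))) \<partial>M)"
    proof (intro nn_integral_cong)
      fix \<omega>
      have "T \<omega> * ennreal (P k \<omega> * gg (eps (-1 - int k) \<omega>)) =
         ennreal (e (eps (int t) \<omega>) * (\<Prod>j\<in>{0..<int t}. cc (eps j \<omega>)) * (P k \<omega> * gg (eps (-1 - int k) \<omega>)))"
        unfolding T_def using en cc_nn gg_nn Pnn by (simp add: ennreal_mult prod_nonneg)
      also have "\<dots> = ennreal (e (eps (int t) \<omega>) * gg (eps (-1 - int k) \<omega>) * (\<Prod>j\<in>{-int k..<int t}. cc (eps j \<omega>)))"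
        using prod_split[where t=t and k=k and \<omega>=\<omega>] unfolding P_def by (simp add: ac_simps)
      finally show "T \<omega> * ennreal (P k \<omega> * gg (eps (-1 - int k) \<omega>)) = \<dots>" .
    qed
    also have "\<dots> = Ee * G * \<gamma> ^ (k + t)"
      using prod2[of "{-int k..<int t}" "int t" "-1 - int k" e gg] en gg_nn by (simp add: Ee_def G_def nat_add_distrib add.commute)
    finally show ?thesis .
  qed
  have I3: "(\<integral>\<^sup>+\<omega>. T \<omega> * ennreal (P k \<omega> * uu (x (-1 - int k) \<omega>)) \<partial>M) = Ee * \<gamma> ^ (k + t) * U" for k
  proof -
    have uf: "(\<lambda>z::int\<Rightarrow>real. ennreal (uu (z (-1 - int k)))) \<in> borel_measurable (PiM UNIV (\<lambda>_. borel))"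
      using measurable_compose[OF measurable_component_singleton[of "-1 - int k" UNIV "\<lambda>_. borel"] measurable_compose[OF uu_m measurable_ennreal]] by simp
    have Fm: "(\<lambda>z. ennreal (e (z (int t)) * (\<Prod>j\<in>{-int k..<int t}. cc (z j)))) \<in> borel_measurable (PiM UNIV (\<lambda>_. borel))"
      by (rule pim_meas[OF em])
    have "(\<integral>\<^sup>+\<omega>. T \<omega> * ennreal (P k \<omega> * uu (x (-1 - int k) \<omega>)) \<partial>M)
       = (\<integral>\<^sup>+\<omega>. (\<lambda>z. ennreal (e (z (int t)) * (\<Prod>j\<in>{-int k..<int t}. cc (z j)))) (\<lambda>s. eps s \<omega>) *
             (\<lambda>z. ennreal (uu (z (-1 - int k)))) (\<lambda>s. x s \<omega>) \<partial>M)"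
    proof (intro nn_integral_cong)
      fix \<omega>
      have "T \<omega> * ennreal (P k \<omega> * uu (x (-1 - int k) \<omega>)) =
         ennreal (e (eps (int t) \<omega>) * (\<Prod>j\<in>{0..<int t}. cc (eps j \<omega>)) * P k \<omega>) * ennreal (uu (x (-1 - int k) \<omega>))"
        unfolding T_def using en cc_nn uu_nn Pnn by (simp add: ennreal_mult prod_nonneg mult.assoc)
      also have "\<dots> = ennreal (e (eps (int t) \<omega>) * (\<Prod>j\<in>{-int k..<int t}. cc (eps j \<omega>))) * ennreal (uu (x (-1 - int k) \<omega>))"
        using prod_split[where t=t and k=k and \<omega>=\<omega>] unfolding P_def by (simp add: ac_simps)
      finally show "T \<omega> * ennreal (P k \<omega> * uu (x (-1 - int k) \<omega>)) = \<dots>" by simp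
    qed
    also have "\<dots> = (\<integral>\<^sup>+\<omega>. ennreal (e (eps (int t) \<omega>) * (\<Prod>j\<in>{-int k..<int t}. cc (eps j \<omega>))) \<partial>M) *
        (\<integral>\<^sup>+\<omega>. ennreal (uu (x (-1 - int k) \<omega>)) \<partial>M)"
      using indep_var_nn_integral_mult[OF xe Fm uf] by simp
    also have "\<dots> = Ee * \<gamma> ^ (k + t) * U"
      using prod1[of "{-int k..<int t}" "int t" e] en x_u[of "-1 - int k"] by (simp add: Ee_def U_def nat_add_distrib add.commute)
    finally show ?thesis .
  qed
  have "(\<integral>\<^sup>+\<omega>. T \<omega> * (ennreal (Z0 \<omega>) + Bs \<omega>) \<partial>M) = (\<integral>\<^sup>+\<omega>. T \<omega> * ennreal (Z0 \<omega>) \<partial>M) +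
      (\<Sum>k. (\<integral>\<^sup>+\<omega>. T \<omega> * ennreal (P k \<omega> * gg (eps (-1 - int k) \<omega>)) \<partial>M) + (\<integral>\<^sup>+\<omega>. T \<omega> * ennreal (P k \<omega> * uu (x (-1 - int k) \<omega>)) \<partial>M))"
    unfolding eq1 by (simp add: nn_integral_add nn_integral_suminf)
  also have "\<dots> = A0 * (Ee * \<gamma> ^ t) + (\<Sum>k. (Ee * \<gamma> ^ t * (G + U)) * \<gamma> ^ k)"
  proof -
    have "(\<lambda>k. Ee * G * \<gamma> ^ (k + t) + Ee * \<gamma> ^ (k + t) * U) = (\<lambda>k. (Ee * \<gamma> ^ t * (G + U)) * \<gamma> ^ k)"
      by (simp add: fun_eq_iff power_add algebra_simps)
    then show ?thesis unfolding I1 I2 I3 by simp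
  qed
  also have "\<dots> = Ee * \<gamma> ^ t * (A0 + (\<Sum>k. \<gamma> ^ k) * (G + U))"
    unfolding ennreal_suminf_cmult by (simp add: algebra_simps)
  finally show ?thesis by (simp add: T_def Ee_def A0_def G_def U_def)
qed

end


lemma powr_add_le:
  fixes x y a :: real
  assumes "0 \<le> x" "0 \<le> y" "0 < a" "a \<le> 1"
  shows "(x + y) powr a \<le> x powr a + y powr a"
proof (cases "x + y = 0")
  case True then show ?thesis using assms by simp
next
  case False
  define s where "s = x + y"
  have s: "s > 0" using False assms unfolding s_def by simp
  have "x / s \<le> (x / s) powr a"
    using powr_mono'[of a 1 "x/s"] assms s by (simp add: s_def divide_le_eq_1)
  moreover have "y / s \<le> (y / s) powr a"
    using powr_mono'[of a 1 "y/s"] assms s by (simp add: s_def divide_le_eq_1)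
  moreover have "x / s + y / s = 1" using s by (simp add: s_def add_divide_distrib[symmetric])
  ultimately have "1 \<le> (x / s) powr a + (y / s) powr a" by linarith
  then have "1 \<le> (x powr a + y powr a) / s powr a"
    using assms s by (simp add: powr_divide add_divide_distrib)
  then show ?thesis using s unfolding s_def[symmetric] by (simp add: le_divide_eq)
qed

lemma powr_sum_le:
  fixes b :: "nat \<Rightarrow> real"
  assumes "\<And>k. 0 \<le> b k" "0 < a" "a \<le> 1"
  shows "(\<Sum>k<n. b k) powr a \<le> (\<Sum>k<n. b k powr a)"
proof (induction n)
  case 0 then show ?case by simp
next
  case (Suc n)
  have "(\<Sum>k<Suc n. b k) powr a \<le> (\<Sum>k<n. b k) powr a + b n powr a"
    using powr_add_le[of "\<Sum>k<n. b k" "b n" a] assms by (simp add: sum_nonneg)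
  then show ?case using Suc by simp
qed

lemma powr_sums_le:
  fixes b :: "nat \<Rightarrow> real"
  assumes b: "\<And>k. 0 \<le> b k" and a: "0 < a" "a \<le> 1" and S: "b sums S"
  shows "ennreal (S powr a) \<le> (\<Sum>k. ennreal (b k powr a))"
proof -
  have lim: "(\<lambda>n. ennreal ((\<Sum>k<n. b k) powr a)) \<longlonglongrightarrow> ennreal (S powr a)"
    using S a b unfolding sums_def
    by (intro tendsto_ennrealI tendsto_powr2) (auto simp: sum_nonneg)
  show ?thesis
  proof (rule LIMSEQ_le_const2[OF lim], intro exI allI impI)
    fix n :: nat
    have "ennreal ((\<Sum>k<n. b k) powr a) \<le> ennreal (\<Sum>k<n. b k powr a)"
      using powr_sum_le[OF b a] by (rule ennreal_leI)
    also have "\<dots> = (\<Sum>k<n. ennreal (b k powr a))" by (simp add: sum_ennreal)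
    also have "\<dots> \<le> (\<Sum>k. ennreal (b k powr a))" by (rule sum_le_suminf) auto
    finally show "ennreal ((\<Sum>k<n. b k) powr a) \<le> (\<Sum>k. ennreal (b k powr a))" .
  qed
qed

lemma series_shift:
  fixes A B :: "nat \<Rightarrow> real"
  assumes "A sums S1" "B sums S2" "\<And>k. A (Suc k) = C * B k"
  shows "S1 = A 0 + C * S2"
proof -
  have "(\<lambda>k. A (Suc k)) sums (S1 - A 0)" using assms(1) by (simp add: sums_Suc_iff)
  moreover have "(\<lambda>k. A (Suc k)) sums (C * S2)" using sums_mult[OF assms(2), of C] assms(3) by simp
  ultimately show ?thesis using sums_unique2 by fastforce
qed

lemma sig_rec:
  fixes E X s :: "int \<Rightarrow> real" and c g u :: "real \<Rightarrow> real"
  assumes S: "\<And>t. (\<lambda>k. (\<Prod>j<Suc k. c (E (t - 1 - int j))) * (g (E (t - 1 - int (Suc k))) + u (X (t - 1 - int (Suc k)))))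
      sums (s t - g (E (t - 1)) - u (X (t - 1)))"
  shows "s t = g (E (t - 1)) + u (X (t - 1)) + c (E (t - 1)) * s (t - 1)"
proof -
  define A where "A k = (\<Prod>j<Suc k. c (E (t - 1 - int j))) * (g (E (t - 1 - int (Suc k))) + u (X (t - 1 - int (Suc k))))" for k
  define B where "B k = (\<Prod>j<Suc k. c (E (t - 1 - 1 - int j))) * (g (E (t - 1 - 1 - int (Suc k))) + u (X (t - 1 - 1 - int (Suc k))))" for k
  have AB: "A (Suc k) = c (E (t - 1)) * B k" for k
  proof -
    have "(\<Prod>j<Suc (Suc k). c (E (t - 1 - int j))) = c (E (t - 1)) * (\<Prod>j<Suc k. c (E (t - 1 - int (Suc j))))"
      by (subst prod.lessThan_Suc_shift) simp
    also have "(\<Prod>j<Suc k. c (E (t - 1 - int (Suc j)))) = (\<Prod>j<Suc k. c (E (t - 1 - 1 - int j)))"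
      by (intro prod.cong refl) (simp add: algebra_simps)
    finally have "(\<Prod>j<Suc (Suc k). c (E (t - 1 - int j))) = c (E (t - 1)) * (\<Prod>j<Suc k. c (E (t - 1 - 1 - int j)))" .
    moreover have "t - 1 - int (Suc (Suc k)) = t - 1 - 1 - int (Suc k)" by simp
    ultimately show ?thesis unfolding A_def B_def by (simp only: mult.assoc)
  qed
  have "s t - g (E (t - 1)) - u (X (t - 1)) = A 0 + c (E (t - 1)) * (s (t - 1) - g (E (t - 1 - 1)) - u (X (t - 1 - 1)))"
  proof -
    have SA: "A sums (s t - g (E (t - 1)) - u (X (t - 1)))" unfolding A_def[abs_def] using S[of t] .
    have SB: "B sums (s (t - 1) - g (E (t - 1 - 1)) - u (X (t - 1 - 1)))" unfolding B_def[abs_def] using S[of "t - 1"] .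
    show ?thesis by (rule series_shift[OF SA SB AB])
  qed
  moreover have "A 0 = c (E (t - 1)) * (g (E (t - 1 - 1)) + u (X (t - 1 - 1)))"
    by (simp add: A_def)
  ultimately show ?thesis by (simp add: algebra_simps)
qed

lemma xi_formula:
  fixes \<xi> :: "nat \<Rightarrow> real" and f :: "int \<Rightarrow> real"
  assumes "\<And>n. \<xi> (Suc n) = f (int n) * \<xi> n"
  shows "\<xi> n = (\<Prod>j\<in>{0..<int n}. f j) * \<xi> 0"
proof (induction n)
  case 0 then show ?case by simp
next
  case (Suc n)
  have "{0..<int (Suc n)} = insert (int n) {0..<int n}" by auto
  then show ?case using Suc assms by simp
qed

lemma prod_reindex_neg:
  "(\<Prod>j<k. f (-1 - int j)) = (\<Prod>j\<in>{-int k..<0}. (f j :: real))"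
proof (induction k)
  case 0 then show ?case by simp
next
  case (Suc k)
  have "{-int (Suc k)..<0} = insert (-1 - int k) {-int k..<0}" by auto
  then show ?case using Suc by (simp add: mult.commute)
qed


lemma (in prob_space) indep_from_vimage:
  assumes ind: "indep_set (sets (vimage_algebra (space M) Z borel))
      (sets (vimage_algebra (space M) E (PiM UNIV (\<lambda>_::int. (borel::real measure)))))"
    and Zm: "Z \<in> borel_measurable M" and Em: "E \<in> measurable M (PiM UNIV (\<lambda>_::int. (borel::real measure)))"
    and hm: "(h :: real \<Rightarrow> real) \<in> borel_measurable borel"
  shows "indep_var (PiM UNIV (\<lambda>_::int. borel)) (\<lambda>\<omega> (t::int). h (Z \<omega>)) (PiM UNIV (\<lambda>_. borel)) E"
proof -
  have hP: "(\<lambda>v (t::int). h v) \<in> measurable borel (PiM UNIV (\<lambda>_::int. (borel::real measure)))"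
    by (rule measurable_PiM_single') (auto simp: hm)
  have rvZ: "(\<lambda>\<omega> (t::int). h (Z \<omega>)) \<in> measurable M (PiM UNIV (\<lambda>_::int. (borel::real measure)))"
    using measurable_compose[OF Zm hP] by simp
  define V where "V = vimage_algebra (space M) Z borel"
  define W where "W = vimage_algebra (space M) E (PiM UNIV (\<lambda>_::int. (borel::real measure)))"
  have s1: "sigma_sets (space M) {(\<lambda>\<omega> (t::int). h (Z \<omega>)) -` A \<inter> space M |A. A \<in> sets (PiM UNIV (\<lambda>_::int. (borel::real measure)))} \<subseteq> sets V"
  proof -
    have "{(\<lambda>\<omega> (t::int). h (Z \<omega>)) -` A \<inter> space M |A. A \<in> sets (PiM UNIV (\<lambda>_::int. (borel::real measure)))} \<subseteq> sets V"
    proof safe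
      fix A assume A: "A \<in> sets (PiM UNIV (\<lambda>_::int. (borel::real measure)))"
      have "(\<lambda>v (t::int). h v) -` A \<inter> space borel \<in> sets borel" using hP A by (rule measurable_sets)
      then have B: "(\<lambda>v (t::int). h v) -` A \<in> sets borel" by simp
      have "(\<lambda>\<omega> (t::int). h (Z \<omega>)) -` A \<inter> space M = Z -` ((\<lambda>v (t::int). h v) -` A) \<inter> space M" by auto
      also have "\<dots> \<in> sets V" unfolding V_def using B by (auto simp: sets_vimage_algebra2)
      finally show "(\<lambda>\<omega> (t::int). h (Z \<omega>)) -` A \<inter> space M \<in> sets V" .
    qed
    then show ?thesis using sets.sigma_sets_subset[of _ V] unfolding V_def by simp
  qed
  have s2: "sigma_sets (space M) {E -` A \<inter> space M |A. A \<in> sets (PiM UNIV (\<lambda>_::int. (borel::real measure)))} \<subseteq> sets W"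
  proof -
    have "E \<in> space M \<rightarrow> space (PiM UNIV (\<lambda>_::int. (borel::real measure)))" using measurable_space[OF Em] by blast
    then have "{E -` A \<inter> space M |A. A \<in> sets (PiM UNIV (\<lambda>_::int. (borel::real measure)))} = sets W"
      unfolding W_def by (simp add: sets_vimage_algebra2)
    then show ?thesis using sets.sigma_sets_subset[of _ W] unfolding W_def by simp
  qed
  show ?thesis
    unfolding indep_var_eq
  proof (intro conjI rvZ Em)
    show "indep_set
      (sigma_sets (space M) {(\<lambda>\<omega> (t::int). h (Z \<omega>)) -` A \<inter> space M |A. A \<in> sets (PiM UNIV (\<lambda>_::int. (borel::real measure)))})
      (sigma_sets (space M) {E -` A \<inter> space M |A. A \<in> sets (PiM UNIV (\<lambda>_::int. (borel::real measure)))})"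
      unfolding indep_set_def
      by (rule indep_sets_mono_sets[OF ind[unfolded indep_set_def]]) (use s1 s2 in \<open>auto simp: V_def W_def split: bool.split\<close>)
  qed
qed

lemma (in prob_space) stat_marg:
  assumes st: "stationary_proc M x" and xm: "\<And>t. x t \<in> borel_measurable M"
    and f: "(f :: real \<Rightarrow> ennreal) \<in> borel_measurable borel"
  shows "(\<integral>\<^sup>+\<omega>. f (x s \<omega>) \<partial>M) = (\<integral>\<^sup>+\<omega>. f (x 0 \<omega>) \<partial>M)"
proof -
  have m1: "(\<lambda>\<omega> t. x (t + s) \<omega>) \<in> measurable M (PiM UNIV (\<lambda>_. borel))"
    by (rule measurable_PiM_single') (auto simp: xm)
  have m0: "(\<lambda>\<omega> t. x t \<omega>) \<in> measurable M (PiM UNIV (\<lambda>_. borel))"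
    by (rule measurable_PiM_single') (auto simp: xm)
  have fm: "(\<lambda>z. f (z 0)) \<in> borel_measurable (PiM UNIV (\<lambda>_::int. (borel::real measure)))"
    using measurable_compose[OF measurable_component_singleton[of 0 UNIV "\<lambda>_. borel"] f] by simp
  have eq: "distr M (PiM UNIV (\<lambda>_. borel)) (\<lambda>\<omega> t. x (t + s) \<omega>) = distr M (PiM UNIV (\<lambda>_. borel)) (\<lambda>\<omega> t. x t \<omega>)"
    using st unfolding stationary_proc_def by blast
  have "(\<integral>\<^sup>+\<omega>. f (x s \<omega>) \<partial>M) = (\<integral>\<^sup>+z. f (z 0) \<partial>distr M (PiM UNIV (\<lambda>_. borel)) (\<lambda>\<omega> t. x (t + s) \<omega>))"
    using fm m1 by (simp add: nn_integral_distr)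
  also have "\<dots> = (\<integral>\<^sup>+z. f (z 0) \<partial>distr M (PiM UNIV (\<lambda>_. borel)) (\<lambda>\<omega> t. x t \<omega>))" by (simp only: eq)
  also have "\<dots> = (\<integral>\<^sup>+\<omega>. f (x 0 \<omega>) \<partial>M)"
    using fm m0 by (simp add: nn_integral_distr)
  finally show ?thesis .
qed


lemma pw_bound:
  fixes P a0 s0 \<alpha> :: real and B :: ennreal
  assumes "0 \<le> P" "0 \<le> a0" "0 \<le> s0" "0 < \<alpha>" "\<alpha> \<le> 1" "ennreal (s0 powr \<alpha>) \<le> B"
  shows "ennreal (\<bar>P * (a0 - s0)\<bar> powr \<alpha>) \<le> ennreal (P powr \<alpha>) * (ennreal (a0 powr \<alpha>) + B)"
proof -
  have "\<bar>a0 - s0\<bar> \<le> a0 + s0" using assms by linarith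
  then have "\<bar>a0 - s0\<bar> powr \<alpha> \<le> (a0 + s0) powr \<alpha>" by (rule powr_mono2[rotated 2]) (use assms in auto)
  also have "\<dots> \<le> a0 powr \<alpha> + s0 powr \<alpha>" by (rule powr_add_le) (use assms in auto)
  finally have h: "\<bar>a0 - s0\<bar> powr \<alpha> \<le> a0 powr \<alpha> + s0 powr \<alpha>" .
  have "\<bar>P * (a0 - s0)\<bar> powr \<alpha> = P powr \<alpha> * \<bar>a0 - s0\<bar> powr \<alpha>" using assms by (simp add: abs_mult powr_mult)
  also have "\<dots> \<le> P powr \<alpha> * (a0 powr \<alpha> + s0 powr \<alpha>)" by (rule mult_left_mono[OF h]) simp
  finally have "ennreal (\<bar>P * (a0 - s0)\<bar> powr \<alpha>) \<le> ennreal (P powr \<alpha> * (a0 powr \<alpha> + s0 powr \<alpha>))"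
    by (rule ennreal_leI)
  also have "\<dots> = ennreal (P powr \<alpha>) * (ennreal (a0 powr \<alpha>) + ennreal (s0 powr \<alpha>))"
    by (simp add: ennreal_mult ennreal_plus)
  also have "\<dots> \<le> ennreal (P powr \<alpha>) * (ennreal (a0 powr \<alpha>) + B)"
    using assms(6) by (intro mult_left_mono add_left_mono) auto
  finally show ?thesis .
qed

lemma (in prob_space) finish:
  fixes f :: "'a \<Rightarrow> real"
  assumes fm: "f \<in> borel_measurable M" and fn: "\<And>\<omega>. 0 \<le> f \<omega>" and B: "0 \<le> B"
    and b: "(\<integral>\<^sup>+\<omega>. ennreal (f \<omega>) \<partial>M) \<le> ennreal B"
  shows "integrable M f" "expectation f \<le> B"
proof -
  show "integrable M f"
    by (rule integrableI_nonneg[OF fm]) (use fn b in \<open>auto intro: le_less_trans\<close>)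
  have "expectation f = enn2real (\<integral>\<^sup>+\<omega>. ennreal (f \<omega>) \<partial>M)"
    by (rule integral_eq_nn_integral[OF fm]) (simp add: fn)
  also have "\<dots> \<le> enn2real (ennreal B)" by (rule enn2real_mono[OF b]) simp
  also have "\<dots> = B" using B by simp
  finally show "expectation f \<le> B" .
qed

lemma bigO_geo:
  fixes E :: "nat \<Rightarrow> real"
  assumes "\<And>t. 0 \<le> E t" "\<And>t. E t \<le> C * \<gamma> ^ t" "0 \<le> \<gamma>" "\<gamma> \<le> \<rho>"
  shows "E \<in> O(\<lambda>t. \<rho> ^ t)"
proof (rule bigoI[where c = C], rule always_eventually, rule allI)
  fix t
  have C: "0 \<le> C" using assms(1)[of 0] assms(2)[of 0] by simp
  have "norm (E t) = E t" using assms(1) by simp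
  also have "\<dots> \<le> C * \<gamma> ^ t" by (rule assms(2))
  also have "\<dots> \<le> C * \<rho> ^ t" using assms C by (intro mult_left_mono power_mono) auto
  also have "\<dots> = C * norm (\<rho> ^ t)" using assms by simp
  finally show "norm (E t) \<le> C * norm (\<rho> ^ t)" .
qed

theorem proposition3p2:
  fixes M :: "'a measure"
    and F :: "int \<Rightarrow> 'a measure"
    and eps x :: "int \<Rightarrow> 'a \<Rightarrow> real"
    and g u c :: "real \<Rightarrow> real"
    and \<delta> \<alpha> :: real
    and \<sigma> R :: "int \<Rightarrow> 'a \<Rightarrow> real"
    and \<sigma>t Rt :: "nat \<Rightarrow> 'a \<Rightarrow> real"
  assumes P: "prob_space M"
    and delta: "\<delta> \<ge> 0"
    and g_cont: "continuous_on UNIV g" and g_nn: "\<And>y. g y \<ge> 0"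
    and u_cont: "continuous_on UNIV u" and u_nn: "\<And>y. u y \<ge> 0"
    and c_cont: "continuous_on UNIV c" and c_nn: "\<And>y. c y \<ge> 0"
    \<comment> \<open>\<open>eps\<close> is i.i.d. with mean 0 and variance 1\<close>
    and eps_indep: "prob_space.indep_vars M (\<lambda>_. borel) eps UNIV"
    and eps_id: "\<And>t. distr M borel (eps t) = distr M borel (eps 0)"
    and eps_sq_int: "\<And>t. integrable M (\<lambda>\<omega>. (eps t \<omega>)\<^sup>2)"
    and eps_mean: "\<And>t. prob_space.expectation M (eps t) = 0"
    and eps_var: "\<And>t. prob_space.expectation M (\<lambda>\<omega>. (eps t \<omega>)\<^sup>2) = 1"
    \<comment> \<open>\<open>x\<close> strictly stationary ergodic, independent of \<open>eps\<close>\<close>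
    and x_rv: "\<And>t. x t \<in> borel_measurable M"
    and x_stat: "stationary_proc M x"
    and x_erg: "ergodic_proc M x"
    and x_eps_indep: "prob_space.indep_var M
          (PiM UNIV (\<lambda>_. borel)) (\<lambda>\<omega> t. eps t \<omega>) (PiM UNIV (\<lambda>_. borel)) (\<lambda>\<omega> t. x t \<omega>)"
    \<comment> \<open>\<open>(eps_t, x_t)\<close> adapted to a filtration \<open>F\<close>\<close>
    and F_sub: "\<And>t. subalgebra M (F t)"
    and F_mono: "\<And>s t. s \<le> t \<Longrightarrow> sets (F s) \<subseteq> sets (F t)"
    and eps_adapt: "\<And>t. eps t \<in> borel_measurable (F t)"
    and x_adapt: "\<And>t. x t \<in> borel_measurable (F t)"
    \<comment> \<open>moment conditions\<close>
    and alpha: "0 < \<alpha>" "\<alpha> \<le> 1"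
    and mom_eps: "\<And>t. integrable M (\<lambda>\<omega>. \<bar>eps t \<omega>\<bar> powr (\<delta> * \<alpha>))"
    and mom_u: "\<And>t. integrable M (\<lambda>\<omega>. u (x t \<omega>) powr \<alpha>)"
    and mom_c_int: "\<And>t. integrable M (\<lambda>\<omega>. c (eps t \<omega>) powr \<alpha>)"
    and mom_c: "\<And>t. prob_space.expectation M (\<lambda>\<omega>. c (eps t \<omega>) powr \<alpha>) < 1"
    and mom_g: "\<And>t. integrable M (\<lambda>\<omega>. g (eps t \<omega>) powr \<alpha>)"
    \<comment> \<open>the stationary ergodic solution \<open>(R, \<sigma>)\<close>\<close>
    and sigma_rv: "\<And>t. \<sigma> t \<in> borel_measurable M"
    and sigma_pos: "\<And>t. prob_space.prob M {\<omega> \<in> space M. \<sigma> t \<omega> > 0} = 1"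
    and sigma_stat: "stationary_proc M \<sigma>"
    and sigma_erg: "ergodic_proc M \<sigma>"
    and sigma_eq: "\<And>t. AE \<omega> in M.
          (\<lambda>k. (\<Prod>j<Suc k. c (eps (t - 1 - int j) \<omega>)) *
                 (g (eps (t - 1 - int (Suc k)) \<omega>) + u (x (t - 1 - int (Suc k)) \<omega>)))
          sums (\<bar>\<sigma> t \<omega>\<bar> powr \<delta> - g (eps (t - 1) \<omega>) - u (x (t - 1) \<omega>))"
    and R_def: "\<And>t \<omega>. R t \<omega> = \<sigma> t \<omega> * eps t \<omega>"
    \<comment> \<open>the process started at time 0\<close>
    and sigt_rec: "\<And>n \<omega>. \<bar>\<sigma>t (Suc n) \<omega>\<bar> powr \<delta> =
          g (eps (int n) \<omega>) + u (x (int n) \<omega>) + c (eps (int n) \<omega>) * \<bar>\<sigma>t n \<omega>\<bar> powr \<delta>"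
    and sigt0_rv: "\<sigma>t 0 \<in> borel_measurable M"
    and sigt0_indep: "prob_space.indep_set M
          (sets (vimage_algebra (space M) (\<sigma>t 0) borel))
          (sets (vimage_algebra (space M) (\<lambda>\<omega> t. eps t \<omega>) (PiM UNIV (\<lambda>_. borel))))"
    and sigt0_mom: "integrable M (\<lambda>\<omega>. \<bar>\<sigma>t 0 \<omega>\<bar> powr (\<delta> * \<alpha>))"
    and Rt_def: "\<And>t \<omega>. Rt t \<omega> = \<sigma>t t \<omega> * eps (int t) \<omega>"
  shows "\<exists>\<rho>::real. 0 < \<rho> \<and> \<rho> < 1 \<and>
    (let \<xi> = (\<lambda>t \<omega>. \<bar>\<sigma>t t \<omega>\<bar> powr \<delta> - \<bar>\<sigma> (int t) \<omega>\<bar> powr \<delta>);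
         \<psi> = (\<lambda>t \<omega>. \<bar>Rt t \<omega>\<bar> powr \<delta> - \<bar>R (int t) \<omega>\<bar> powr \<delta>)
     in (\<forall>t. integrable M (\<lambda>\<omega>. \<bar>\<xi> t \<omega>\<bar> powr \<alpha>)) \<and>
        (\<lambda>t. prob_space.expectation M (\<lambda>\<omega>. \<bar>\<xi> t \<omega>\<bar> powr \<alpha>)) \<in> O(\<lambda>t. \<rho> ^ t) \<and>
        (\<forall>t. integrable M (\<lambda>\<omega>. \<bar>\<psi> t \<omega>\<bar> powr \<alpha>)) \<and>
        (\<lambda>t. prob_space.expectation M (\<lambda>\<omega>. \<bar>\<psi> t \<omega>\<bar> powr \<alpha>)) \<in> O(\<lambda>t. \<rho> ^ t))"
  proof -
  interpret prob_space M by (rule P)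
  have eps_rv[measurable]: "\<And>t. eps t \<in> borel_measurable M"
    using eps_indep by (auto simp: indep_vars_def)
  note x_rv[measurable] sigma_rv[measurable] sigt0_rv[measurable]
  have c_m[measurable]: "c \<in> borel_measurable borel" using c_cont by (rule borel_measurable_continuous_onI)
  have g_m[measurable]: "g \<in> borel_measurable borel" using g_cont by (rule borel_measurable_continuous_onI)
  have u_m[measurable]: "u \<in> borel_measurable borel" using u_cont by (rule borel_measurable_continuous_onI)
  define cc where "cc y = c y powr \<alpha>" for y
  define gg where "gg y = g y powr \<alpha>" for y
  define uu where "uu y = u y powr \<alpha>" for y
  define Z0 where "Z0 \<omega> = \<bar>\<sigma>t 0 \<omega>\<bar> powr (\<delta> * \<alpha>)" for \<omega>
  have cc_m[measurable]: "cc \<in> borel_measurable borel" unfolding cc_def[abs_def] by measurable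
  have gg_m[measurable]: "gg \<in> borel_measurable borel" unfolding gg_def[abs_def] by measurable
  have uu_m[measurable]: "uu \<in> borel_measurable borel" unfolding uu_def[abs_def] by measurable
  have epsP: "(\<lambda>\<omega> t. eps t \<omega>) \<in> measurable M (PiM UNIV (\<lambda>_. borel))"
    using x_eps_indep by (rule indep_var_rv1)
  have ze: "indep_var (PiM UNIV (\<lambda>_. borel)) (\<lambda>\<omega> (t::int). Z0 \<omega>) (PiM UNIV (\<lambda>_. borel)) (\<lambda>\<omega> t. eps t \<omega>)"
    unfolding Z0_def
    by (rule indep_from_vimage[OF sigt0_indep sigt0_rv epsP, of "\<lambda>v. \<bar>v\<bar> powr (\<delta> * \<alpha>)"]) measurable
  have x_u: "(\<integral>\<^sup>+\<omega>. ennreal (uu (x s \<omega>)) \<partial>M) = (\<integral>\<^sup>+\<omega>. ennreal (uu (x 0 \<omega>)) \<partial>M)" for s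
    by (rule stat_marg[OF x_stat x_rv, of "\<lambda>v. ennreal (uu v)"]) measurable
  interpret S: Sett M eps x cc gg uu Z0
    by unfold_locales (use eps_indep eps_id x_eps_indep ze x_u in \<open>auto simp: cc_def gg_def uu_def\<close>)

  define \<xi> where "\<xi> n \<omega> = \<bar>\<sigma>t n \<omega>\<bar> powr \<delta> - \<bar>\<sigma> (int n) \<omega>\<bar> powr \<delta>" for n \<omega>
  have AE0: "AE \<omega> in M. \<forall>t. (\<lambda>k. (\<Prod>j<Suc k. c (eps (t - 1 - int j) \<omega>)) *
                 (g (eps (t - 1 - int (Suc k)) \<omega>) + u (x (t - 1 - int (Suc k)) \<omega>)))
          sums (\<bar>\<sigma> t \<omega>\<bar> powr \<delta> - g (eps (t - 1) \<omega>) - u (x (t - 1) \<omega>))"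
    unfolding AE_all_countable using sigma_eq by blast
  have AEb: "AE \<omega> in M. (\<forall>n. \<xi> n \<omega> = (\<Prod>j\<in>{0..<int n}. c (eps j \<omega>)) * \<xi> 0 \<omega>) \<and>
      ennreal ((\<bar>\<sigma> 0 \<omega>\<bar> powr \<delta>) powr \<alpha>) \<le> S.Bs \<omega>"
    using AE0
  proof eventually_elim
    case (elim \<omega>)
    have rec: "\<bar>\<sigma> t \<omega>\<bar> powr \<delta> = g (eps (t - 1) \<omega>) + u (x (t - 1) \<omega>) + c (eps (t - 1) \<omega>) * \<bar>\<sigma> (t - 1) \<omega>\<bar> powr \<delta>" for t
      by (rule sig_rec[where s = "\<lambda>t. \<bar>\<sigma> t \<omega>\<bar> powr \<delta>" and E = "\<lambda>t. eps t \<omega>" and X = "\<lambda>t. x t \<omega>"]) (use elim in blast)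
    have xs: "\<xi> (Suc n) \<omega> = c (eps (int n) \<omega>) * \<xi> n \<omega>" for n
      using sigt_rec[of n \<omega>] rec[of "int n + 1"] by (simp add: \<xi>_def algebra_simps)
    have A: "\<forall>n. \<xi> n \<omega> = (\<Prod>j\<in>{0..<int n}. c (eps j \<omega>)) * \<xi> 0 \<omega>"
      using xi_formula[of "\<lambda>n. \<xi> n \<omega>" "\<lambda>j. c (eps j \<omega>)"] xs by blast
    define b where "b k = (\<Prod>j<k. c (eps (-1 - int j) \<omega>)) * (g (eps (-1 - int k) \<omega>) + u (x (-1 - int k) \<omega>))" for k
    have bnn: "0 \<le> b k" for k using c_nn g_nn u_nn by (simp add: b_def prod_nonneg)
    have "(\<lambda>k. b (Suc k)) sums (\<bar>\<sigma> 0 \<omega>\<bar> powr \<delta> - b 0)"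
      using elim[rule_format, of 0] by (simp add: b_def diff_diff_eq)
    then have bs: "b sums (\<bar>\<sigma> 0 \<omega>\<bar> powr \<delta>)" by (simp add: sums_Suc_iff)
    have "ennreal ((\<bar>\<sigma> 0 \<omega>\<bar> powr \<delta>) powr \<alpha>) \<le> (\<Sum>k. ennreal (b k powr \<alpha>))"
      by (rule powr_sums_le[OF bnn alpha bs])
    also have "\<dots> \<le> S.Bs \<omega>"
      unfolding S.Bs_def
    proof (rule suminf_le[OF _ summableI summableI])
      fix k
      define Q where "Q = (\<Prod>j\<in>{-int k..<0}. c (eps j \<omega>))"
      have Q: "0 \<le> Q" using c_nn by (simp add: Q_def prod_nonneg)
      have bk: "b k = Q * (g (eps (-1 - int k) \<omega>) + u (x (-1 - int k) \<omega>))"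
        unfolding b_def Q_def by (simp add: prod_reindex_neg[of "\<lambda>j. c (eps j \<omega>)"])
      have Qa: "Q powr \<alpha> = (\<Prod>j\<in>{-int k..<0}. cc (eps j \<omega>))"
        unfolding Q_def cc_def by (simp add: prod_powr_distrib)
      have "b k powr \<alpha> \<le> Q powr \<alpha> * (gg (eps (-1 - int k) \<omega>) + uu (x (-1 - int k) \<omega>))"
        unfolding bk gg_def uu_def using Q g_nn u_nn alpha
        by (simp add: powr_mult powr_add_le mult_left_mono)
      then have "ennreal (b k powr \<alpha>) \<le> ennreal (Q powr \<alpha> * gg (eps (-1 - int k) \<omega>) + Q powr \<alpha> * uu (x (-1 - int k) \<omega>))"
        by (intro ennreal_leI) (simp add: distrib_left)
      also have "\<dots> = ennreal (Q powr \<alpha> * gg (eps (-1 - int k) \<omega>)) + ennreal (Q powr \<alpha> * uu (x (-1 - int k) \<omega>))"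
        by (simp add: ennreal_plus gg_def uu_def)
      finally show "ennreal (b k powr \<alpha>) \<le> ennreal ((\<Prod>j\<in>{-int k..<0}. cc (eps j \<omega>)) * gg (eps (-1 - int k) \<omega>)) +
          ennreal ((\<Prod>j\<in>{-int k..<0}. cc (eps j \<omega>)) * uu (x (-1 - int k) \<omega>))"
        unfolding Qa .
    qed
    finally show ?case using A by blast
  qed

  have bound_xi: "AE \<omega> in M. ennreal (\<bar>\<xi> t \<omega>\<bar> powr \<alpha>) \<le>
      ennreal (1 * (\<Prod>j\<in>{0..<int t}. cc (eps j \<omega>))) * (ennreal (Z0 \<omega>) + S.Bs \<omega>)" for t
    using AEb
  proof eventually_elim
    case (elim \<omega>)
    have P: "0 \<le> (\<Prod>j\<in>{0..<int t}. c (eps j \<omega>))" using c_nn by (simp add: prod_nonneg)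
    have "ennreal (\<bar>\<xi> t \<omega>\<bar> powr \<alpha>) \<le> ennreal ((\<Prod>j\<in>{0..<int t}. c (eps j \<omega>)) powr \<alpha>) *
        (ennreal ((\<bar>\<sigma>t 0 \<omega>\<bar> powr \<delta>) powr \<alpha>) + S.Bs \<omega>)"
      unfolding elim[THEN conjunct1, rule_format, of t] \<xi>_def[of 0] of_nat_0
      by (rule pw_bound[OF P _ _ alpha elim[THEN conjunct2]]) auto
    then show ?case by (simp add: Z0_def cc_def powr_powr prod_powr_distrib)
  qed
  have psi_eq: "\<bar>Rt t \<omega>\<bar> powr \<delta> - \<bar>R (int t) \<omega>\<bar> powr \<delta> = \<bar>eps (int t) \<omega>\<bar> powr \<delta> * \<xi> t \<omega>" for t \<omega>
    by (simp add: Rt_def R_def \<xi>_def abs_mult powr_mult algebra_simps)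
  have bound_psi: "AE \<omega> in M. ennreal (\<bar>\<bar>eps (int t) \<omega>\<bar> powr \<delta> * \<xi> t \<omega>\<bar> powr \<alpha>) \<le>
      ennreal (\<bar>eps (int t) \<omega>\<bar> powr (\<delta> * \<alpha>) * (\<Prod>j\<in>{0..<int t}. cc (eps j \<omega>))) * (ennreal (Z0 \<omega>) + S.Bs \<omega>)" for t
    using bound_xi[of t]
  proof eventually_elim
    case (elim \<omega>)
    have "ennreal (\<bar>\<bar>eps (int t) \<omega>\<bar> powr \<delta> * \<xi> t \<omega>\<bar> powr \<alpha>) =
        ennreal (\<bar>eps (int t) \<omega>\<bar> powr (\<delta> * \<alpha>)) * ennreal (\<bar>\<xi> t \<omega>\<bar> powr \<alpha>)"
      by (simp add: abs_mult powr_mult powr_powr ennreal_mult)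
    also have "\<dots> \<le> ennreal (\<bar>eps (int t) \<omega>\<bar> powr (\<delta> * \<alpha>)) *
        (ennreal (1 * (\<Prod>j\<in>{0..<int t}. cc (eps j \<omega>))) * (ennreal (Z0 \<omega>) + S.Bs \<omega>))"
      using elim by (rule mult_left_mono) simp
    also have "\<dots> = ennreal (\<bar>eps (int t) \<omega>\<bar> powr (\<delta> * \<alpha>) * (\<Prod>j\<in>{0..<int t}. cc (eps j \<omega>))) * (ennreal (Z0 \<omega>) + S.Bs \<omega>)"
      by (simp add: ennreal_mult prod_nonneg cc_def mult.assoc)
    finally show ?case .
  qed

  have int_eq: "(\<integral>\<^sup>+\<omega>. ennreal (f \<omega>) \<partial>M) = ennreal (expectation f)"
    if "integrable M f" "\<And>\<omega>. 0 \<le> f \<omega>" for f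
    using that by (intro nn_integral_eq_integral) auto
  define \<gamma>r where "\<gamma>r = expectation (\<lambda>\<omega>. cc (eps 0 \<omega>))"
  define Gr where "Gr = expectation (\<lambda>\<omega>. gg (eps 0 \<omega>))"
  define Ur where "Ur = expectation (\<lambda>\<omega>. uu (x 0 \<omega>))"
  define Ar where "Ar = expectation Z0"
  define Er where "Er = expectation (\<lambda>\<omega>. \<bar>eps 0 \<omega>\<bar> powr (\<delta> * \<alpha>))"
  have \<gamma>: "S.\<gamma> = ennreal \<gamma>r" unfolding S.\<gamma>_def \<gamma>r_def
    by (rule int_eq) (use mom_c_int[of 0] in \<open>simp_all add: cc_def\<close>)
  have G: "(\<integral>\<^sup>+\<omega>. ennreal (gg (eps 0 \<omega>)) \<partial>M) = ennreal Gr" unfolding Gr_def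
    by (rule int_eq) (use mom_g[of 0] in \<open>simp_all add: gg_def\<close>)
  have U: "(\<integral>\<^sup>+\<omega>. ennreal (uu (x 0 \<omega>)) \<partial>M) = ennreal Ur" unfolding Ur_def
    by (rule int_eq) (use mom_u[of 0] in \<open>simp_all add: uu_def\<close>)
  have A: "(\<integral>\<^sup>+\<omega>. ennreal (Z0 \<omega>) \<partial>M) = ennreal Ar" unfolding Ar_def
    by (rule int_eq) (use sigt0_mom in \<open>simp_all add: Z0_def\<close>)
  have Ee: "(\<integral>\<^sup>+\<omega>. ennreal (\<bar>eps 0 \<omega>\<bar> powr (\<delta> * \<alpha>)) \<partial>M) = ennreal Er" unfolding Er_def
    by (rule int_eq) (use mom_eps[of 0] in \<open>simp_all\<close>)
  have E1: "(\<integral>\<^sup>+\<omega>. ennreal 1 \<partial>M) = ennreal 1" by (simp add: emeasure_space_1)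
  have \<gamma>0: "0 \<le> \<gamma>r" unfolding \<gamma>r_def by (rule integral_nonneg_AE) (simp add: cc_def)
  have \<gamma>1: "\<gamma>r < 1" using mom_c[of 0] by (simp add: \<gamma>r_def cc_def)
  have G0: "0 \<le> Gr" unfolding Gr_def by (rule integral_nonneg_AE) (simp add: gg_def)
  have U0: "0 \<le> Ur" unfolding Ur_def by (rule integral_nonneg_AE) (simp add: uu_def)
  have A0: "0 \<le> Ar" unfolding Ar_def by (rule integral_nonneg_AE) (simp add: Z0_def)
  have E0: "0 \<le> Er" unfolding Er_def by (rule integral_nonneg_AE) simp
  have geo: "(\<Sum>k. S.\<gamma> ^ k) = ennreal (1 / (1 - \<gamma>r))"
  proof -
    have "(\<Sum>k. S.\<gamma> ^ k) = (\<Sum>k. ennreal (\<gamma>r ^ k))" using \<gamma>0 by (simp add: \<gamma> ennreal_power)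
    also have "\<dots> = ennreal (\<Sum>k. \<gamma>r ^ k)"
      using \<gamma>0 \<gamma>1 by (intro suminf_ennreal2) (auto intro: summable_geometric)
    also have "\<dots> = ennreal (1 / (1 - \<gamma>r))" using \<gamma>0 \<gamma>1 by (simp add: suminf_geometric)
    finally show ?thesis .
  qed
  define K where "K = Ar + 1 / (1 - \<gamma>r) * (Gr + Ur)"
  have K0: "0 \<le> K" using A0 G0 U0 \<gamma>1 by (simp add: K_def)
  have keyR: "Ee' * S.\<gamma> ^ t * ((\<integral>\<^sup>+\<omega>. ennreal (Z0 \<omega>) \<partial>M) + (\<Sum>k. S.\<gamma> ^ k) *
        ((\<integral>\<^sup>+\<omega>. ennreal (gg (eps 0 \<omega>)) \<partial>M) + (\<integral>\<^sup>+\<omega>. ennreal (uu (x 0 \<omega>)) \<partial>M))) = ennreal (Er' * \<gamma>r ^ t * K)"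
    if "Ee' = ennreal Er'" "0 \<le> Er'" for Ee' Er' t
  proof -
    have d: "0 \<le> 1 / (1 - \<gamma>r)" using \<gamma>1 by simp
    have GU: "0 \<le> Gr + Ur" using G0 U0 by simp
    have GU2: "0 \<le> 1 / (1 - \<gamma>r) * (Gr + Ur)" using d GU by simp
    have e1: "ennreal Gr + ennreal Ur = ennreal (Gr + Ur)" using G0 U0 by (rule ennreal_plus[symmetric])
    have e2: "ennreal (1 / (1 - \<gamma>r)) * ennreal (Gr + Ur) = ennreal (1 / (1 - \<gamma>r) * (Gr + Ur))"
      using d GU by (rule ennreal_mult[symmetric])
    have e3: "ennreal Ar + ennreal (1 / (1 - \<gamma>r) * (Gr + Ur)) = ennreal K"
      unfolding K_def using A0 GU2 by (rule ennreal_plus[symmetric])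
    have e4: "ennreal \<gamma>r ^ t = ennreal (\<gamma>r ^ t)" using \<gamma>0 by (rule ennreal_power)
    have e5: "ennreal Er' * ennreal (\<gamma>r ^ t) = ennreal (Er' * \<gamma>r ^ t)"
      using that(2) \<gamma>0 by (intro ennreal_mult[symmetric]) simp_all
    have e6: "ennreal (Er' * \<gamma>r ^ t) * ennreal K = ennreal (Er' * \<gamma>r ^ t * K)"
      using that(2) \<gamma>0 K0 by (intro ennreal_mult[symmetric]) simp_all
    have geo': "(\<Sum>k. ennreal \<gamma>r ^ k) = ennreal (1 / (1 - \<gamma>r))" using geo by (simp add: \<gamma>)
    show ?thesis unfolding that(1) G U A \<gamma> geo' e1 e2 e3 e4 e5 e6 ..
  qed

  have st_m: "(\<lambda>\<omega>. \<bar>\<sigma>t n \<omega>\<bar> powr \<delta>) \<in> borel_measurable M" for n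
  proof (induction n)
    case 0 then show ?case by measurable
  next
    case (Suc n)
    have "(\<lambda>\<omega>. \<bar>\<sigma>t (Suc n) \<omega>\<bar> powr \<delta>) = (\<lambda>\<omega>. g (eps (int n) \<omega>) + u (x (int n) \<omega>) + c (eps (int n) \<omega>) * \<bar>\<sigma>t n \<omega>\<bar> powr \<delta>)"
      using sigt_rec by (simp add: fun_eq_iff)
    then show ?case using Suc by simp
  qed
  have xi_m[measurable]: "\<xi> t \<in> borel_measurable M" for t
    unfolding \<xi>_def[abs_def] using st_m[of t] by measurable
  have xi_int: "integrable M (\<lambda>\<omega>. \<bar>\<xi> t \<omega>\<bar> powr \<alpha>) \<and> expectation (\<lambda>\<omega>. \<bar>\<xi> t \<omega>\<bar> powr \<alpha>) \<le> 1 * \<gamma>r ^ t * K" for t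
  proof -
    have "(\<integral>\<^sup>+\<omega>. ennreal (\<bar>\<xi> t \<omega>\<bar> powr \<alpha>) \<partial>M) \<le>
        (\<integral>\<^sup>+\<omega>. ennreal ((\<lambda>_. 1) (eps (int t) \<omega>) * (\<Prod>j\<in>{0..<int t}. cc (eps j \<omega>))) * (ennreal (Z0 \<omega>) + S.Bs \<omega>) \<partial>M)"
      using bound_xi[of t] by (intro nn_integral_mono_AE) simp
    also have "\<dots> = ennreal (1 * \<gamma>r ^ t * K)"
      by (rule trans[OF S.key keyR]) (simp_all add: emeasure_space_1)
    finally have b: "(\<integral>\<^sup>+\<omega>. ennreal (\<bar>\<xi> t \<omega>\<bar> powr \<alpha>) \<partial>M) \<le> ennreal (1 * \<gamma>r ^ t * K)" .
    have m: "(\<lambda>\<omega>. \<bar>\<xi> t \<omega>\<bar> powr \<alpha>) \<in> borel_measurable M" by measurable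
    have B: "0 \<le> 1 * \<gamma>r ^ t * K" using \<gamma>0 K0 by simp
    show ?thesis using finish[OF m _ B b] by simp
  qed
  have em: "(\<lambda>y::real. \<bar>y\<bar> powr (\<delta> * \<alpha>)) \<in> borel_measurable borel" by measurable
  have psi_int: "integrable M (\<lambda>\<omega>. \<bar>\<bar>eps (int t) \<omega>\<bar> powr \<delta> * \<xi> t \<omega>\<bar> powr \<alpha>) \<and>
      expectation (\<lambda>\<omega>. \<bar>\<bar>eps (int t) \<omega>\<bar> powr \<delta> * \<xi> t \<omega>\<bar> powr \<alpha>) \<le> Er * \<gamma>r ^ t * K" for t
  proof -
    have "(\<integral>\<^sup>+\<omega>. ennreal (\<bar>\<bar>eps (int t) \<omega>\<bar> powr \<delta> * \<xi> t \<omega>\<bar> powr \<alpha>) \<partial>M) \<le>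
        (\<integral>\<^sup>+\<omega>. ennreal ((\<lambda>y. \<bar>y\<bar> powr (\<delta> * \<alpha>)) (eps (int t) \<omega>) * (\<Prod>j\<in>{0..<int t}. cc (eps j \<omega>))) * (ennreal (Z0 \<omega>) + S.Bs \<omega>) \<partial>M)"
      using bound_psi[of t] by (intro nn_integral_mono_AE) simp
    also have "\<dots> = ennreal (Er * \<gamma>r ^ t * K)"
      by (rule trans[OF S.key[OF em] keyR]) (simp_all add: Ee E0)
    finally have b: "(\<integral>\<^sup>+\<omega>. ennreal (\<bar>\<bar>eps (int t) \<omega>\<bar> powr \<delta> * \<xi> t \<omega>\<bar> powr \<alpha>) \<partial>M) \<le> ennreal (Er * \<gamma>r ^ t * K)" .
    have m: "(\<lambda>\<omega>. \<bar>\<bar>eps (int t) \<omega>\<bar> powr \<delta> * \<xi> t \<omega>\<bar> powr \<alpha>) \<in> borel_measurable M" by measurable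
    have B: "0 \<le> Er * \<gamma>r ^ t * K" using \<gamma>0 K0 E0 by simp
    show ?thesis using finish[OF m _ B b] by simp
  qed
  define \<rho> where "\<rho> = max \<gamma>r (1/2)"
  have \<rho>: "0 < \<rho>" "\<rho> < 1" "\<gamma>r \<le> \<rho>" using \<gamma>1 by (auto simp: \<rho>_def)
  show ?thesis
    unfolding Let_def
  proof (intro exI[of _ \<rho>] conjI \<rho>(1) \<rho>(2) allI)
    fix t
    show "integrable M (\<lambda>\<omega>. \<bar>\<bar>\<sigma>t t \<omega>\<bar> powr \<delta> - \<bar>\<sigma> (int t) \<omega>\<bar> powr \<delta>\<bar> powr \<alpha>)"
      using xi_int[of t] by (simp add: \<xi>_def)
    show "integrable M (\<lambda>\<omega>. \<bar>\<bar>Rt t \<omega>\<bar> powr \<delta> - \<bar>R (int t) \<omega>\<bar> powr \<delta>\<bar> powr \<alpha>)"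
      using psi_int[of t] by (simp add: psi_eq)
  next
    show "(\<lambda>t. expectation (\<lambda>\<omega>. \<bar>\<bar>\<sigma>t t \<omega>\<bar> powr \<delta> - \<bar>\<sigma> (int t) \<omega>\<bar> powr \<delta>\<bar> powr \<alpha>)) \<in> O(\<lambda>t. \<rho> ^ t)"
      by (rule bigO_geo[where C = K and \<gamma> = \<gamma>r]) (use xi_int \<gamma>0 \<rho> in \<open>auto simp: \<xi>_def ac_simps\<close>)
    show "(\<lambda>t. expectation (\<lambda>\<omega>. \<bar>\<bar>Rt t \<omega>\<bar> powr \<delta> - \<bar>R (int t) \<omega>\<bar> powr \<delta>\<bar> powr \<alpha>)) \<in> O(\<lambda>t. \<rho> ^ t)"
      by (rule bigO_geo[where C = "Er * K" and \<gamma> = \<gamma>r]) (use psi_int \<gamma>0 \<rho> in \<open>auto simp: psi_eq ac_simps\<close>)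
  qed
qed

end
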